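(* Let $\mathcal{A}=\{\alpha_1<\dots<\alpha_m\}\subset(0,1)$, $|\mathcal{A}|=m$. Let $(b_t)$ be base forecasts with $b_t\in\mathcal{K}$ and $(y_t)$ real outcomes with $|y_t-b_t^{\alpha}|\le R$ for all $\alpha\in\mathcal{A}$ and all $t$. Let $\ell_t(\theta)=\rho_{\mathcal{A}}(b_t+\theta,y_t)$. Let $\theta_1,\dots,\theta_T$ be the played offsets of MultiQT with learning rate $\eta>0$ started from $\tilde\theta_1=\mathbf{0}$, and let $\mathcal{C}=\bigcap_{t=1}^{T+1}(\mathcal{K}-b_t)$. Then for every $\theta\in\mathcal{C}$, $$\frac1T\sum_{t=1}^T\ell_t(\theta_t)-\frac1T\sum_{t=1}^T\ell_t(\theta)\le\frac{R^2|\mathcal{A}|}{2\eta T}+2\eta|\mathcal{A}|.$$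
   Context: $\mathcal{K}=\{x\in\mathbb{R}^m:x_1\le\dots\le x_m\}$; $\Pi_C$ is Euclidean projection; $C-v=\{x-v:x\in C\}$. Quantile loss: $\rho_\alpha(\hat y,y)=\alpha|y-\hat y|$ if $y-\hat y\ge0$ and $(1-\alpha)|y-\hat y|$ otherwise; $\rho_{\mathcal{A}}(q,y)=\sum_{\alpha\in\mathcal{A}}\rho_\alpha(q^{\alpha},y)$. MultiQT with learning rate $\eta$ and initial hidden offset $\tilde\theta_1\in\mathcal{K}$: for $t=1,2,\dots$, $\theta_t=\Pi_{\mathcal{K}-b_t}(\tilde\theta_t)$, forecast $q_t=b_t+\theta_t$, $\mathrm{cov}_t^{\alpha}=\mathbb{1}\{y_t\le q_t^{\alpha}\}$, and $\tilde\theta_{t+1}^{\alpha}=\tilde\theta_t^{\alpha}-\eta(\mathrm{cov}_t^{\alpha}-\alpha)$ for each $\alpha\in\mathcal{A}$. *)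

theory Defs
  imports Complex_Main
begin

text \<open>Quantile levels are alpha 0 < ... < alpha (m-1); vectors in R^m are
  functions nat => real, only the coordinates i < m matter.\<close>

definition Kset :: "nat \<Rightarrow> (nat \<Rightarrow> real) set" where
  "Kset m = {x. \<forall>i j. i \<le> j \<longrightarrow> j < m \<longrightarrow> x i \<le> x j}"

definition shift_set :: "(nat \<Rightarrow> real) set \<Rightarrow> (nat \<Rightarrow> real) \<Rightarrow> (nat \<Rightarrow> real) set" where
  "shift_set C v = {(\<lambda>i. x i - v i) | x. x \<in> C}"

definition sqdist :: "nat \<Rightarrow> (nat \<Rightarrow> real) \<Rightarrow> (nat \<Rightarrow> real) \<Rightarrow> real" where
  "sqdist m x y = (\<Sum>i<m. (x i - y i)^2)"

definition is_proj :: "nat \<Rightarrow> (nat \<Rightarrow> real) set \<Rightarrow> (nat \<Rightarrow> real) \<Rightarrow> (nat \<Rightarrow> real) \<Rightarrow> bool" where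
  "is_proj m C v x \<longleftrightarrow> x \<in> C \<and> (\<forall>z\<in>C. sqdist m x v \<le> sqdist m z v)"

definition rho :: "real \<Rightarrow> real \<Rightarrow> real \<Rightarrow> real" where
  "rho a yhat y = (if y - yhat \<ge> 0 then a * \<bar>y - yhat\<bar> else (1 - a) * \<bar>y - yhat\<bar>)"

definition rhoA :: "nat \<Rightarrow> (nat \<Rightarrow> real) \<Rightarrow> (nat \<Rightarrow> real) \<Rightarrow> real \<Rightarrow> real" where
  "rhoA m alpha q y = (\<Sum>i<m. rho (alpha i) (q i) y)"

text \<open>Trajectory of MultiQT: hidden offsets tth, played offsets th (time starts at 1).\<close>
definition multiqt :: "nat \<Rightarrow> (nat \<Rightarrow> real) \<Rightarrow> real \<Rightarrow> (nat \<Rightarrow> nat \<Rightarrow> real) \<Rightarrow> (nat \<Rightarrow> real)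
    \<Rightarrow> (nat \<Rightarrow> real) \<Rightarrow> (nat \<Rightarrow> nat \<Rightarrow> real) \<Rightarrow> (nat \<Rightarrow> nat \<Rightarrow> real) \<Rightarrow> bool" where
  "multiqt m alpha \<eta> b y tth1 tth th \<longleftrightarrow>
     (\<forall>i<m. tth 1 i = tth1 i) \<and>
     (\<forall>t\<ge>1. is_proj m (shift_set (Kset m) (b t)) (tth t) (th t)) \<and>
     (\<forall>t\<ge>1. \<forall>i<m. tth (t+1) i =
        tth t i - \<eta> * ((if y t \<le> b t i + th t i then 1 else 0) - alpha i))"

end

theory Submission
  imports Defs
begin

lemma proj_dir:
  fixes x v d :: "nat \<Rightarrow> real"
  assumes P: "is_proj m C v x" and s0: "s0 > 0"
    and mem: "\<And>s. 0 < s \<Longrightarrow> s \<le> s0 \<Longrightarrow> (\<lambda>i. x i + s * d i) \<in> C"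
  shows "(\<Sum>i<m. (x i - v i) * d i) \<ge> 0"
proof (rule ccontr)
  define X where "X = (\<Sum>i<m. (x i - v i) * d i)"
  define Y where "Y = (\<Sum>i<m. (d i)^2)"
  assume "\<not> ?thesis"
  hence X: "X < 0" unfolding X_def by simp
  have Y: "Y \<ge> 0" unfolding Y_def by (simp add: sum_nonneg)
  have key: "0 \<le> 2 * X + s * Y" if "0 < s" "s \<le> s0" for s
  proof -
    have "sqdist m x v \<le> sqdist m (\<lambda>i. x i + s * d i) v"
      using P mem[OF that] unfolding is_proj_def by blast
    also have "sqdist m (\<lambda>i. x i + s * d i) v = sqdist m x v + s * (2 * X + s * Y)"
    proof -
      have "sqdist m (\<lambda>i. x i + s * d i) v = (\<Sum>i<m. (x i - v i)^2 + (s * 2) * ((x i - v i) * d i) + (s * s) * (d i)^2)"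
        unfolding sqdist_def by (rule sum.cong) (auto simp: power2_eq_square algebra_simps)
      also have "\<dots> = sqdist m x v + s * (2 * X + s * Y)"
        unfolding sqdist_def X_def Y_def sum.distrib sum_distrib_left[symmetric]
        by (simp add: algebra_simps)
      finally show ?thesis .
    qed
    finally have "0 \<le> s * (2 * X + s * Y)" by simp
    thus ?thesis using that by (simp add: zero_le_mult_iff)
  qed
  define s where "s = min s0 (- X / (Y + 1))"
  have sp: "0 < s" using s0 X Y unfolding s_def by (simp add: field_simps)
  have "s * Y \<le> (- X / (Y + 1)) * Y" unfolding s_def using Y by (intro mult_right_mono) auto
  also have "\<dots> \<le> - X" using X Y by (simp add: field_simps)
  finally have "2 * X + s * Y < 0" using X by simp
  with key[OF sp] show False unfolding s_def by simp
qed

lemma step_ineq: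
  fixes p a b alpha :: "nat \<Rightarrow> real" and yy :: real
  assumes P: "is_proj m (shift_set (Kset m) b) a p"
    and amono: "\<And>i j. i \<le> j \<Longrightarrow> j < m \<Longrightarrow> alpha i \<le> alpha j"
  shows "(\<Sum>i<m. ((if yy \<le> b i + p i then 1 else 0) - alpha i) * (p i - a i)) \<le> 0"
proof -
  define c where "c i = (if yy \<le> b i + p i then 1 else (0::real))" for i
  define d where "d i = alpha i - c i" for i
  have "p \<in> shift_set (Kset m) b" using P unfolding is_proj_def by blast
  then obtain x0 where x0: "x0 \<in> Kset m" and px: "p = (\<lambda>i. x0 i - b i)"
    unfolding shift_set_def by blast
  have qmono: "b i + p i \<le> b j + p j" if "i \<le> j" "j < m" for i j
    using x0 that unfolding Kset_def px by auto
  define S where "S = {yy - (b i + p i) | i. i < m \<and> b i + p i < yy} \<union> {1}"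
  have Sfin: "finite S" unfolding S_def by auto
  define s0 where "s0 = Min S"
  have s0pos: "s0 > 0" unfolding s0_def using Sfin
    by (subst Min_gr_iff) (auto simp: S_def)
  have s0le: "s0 \<le> yy - (b i + p i)" if "i < m" "b i + p i < yy" for i
    unfolding s0_def using Sfin that by (intro Min_le) (auto simp: S_def)
  have mem: "(\<lambda>i. p i + s * d i) \<in> shift_set (Kset m) b" if "0 < s" "s \<le> s0" for s
  proof -
    have "(\<lambda>i. p i + s * d i + b i) \<in> Kset m"
      unfolding Kset_def
    proof (safe)
      fix i j assume ij: "i \<le> j" "j < m"
      have q: "b i + p i \<le> b j + p j" using qmono ij .
      have al: "s * alpha i \<le> s * alpha j" using amono[OF ij] that by simp
      show "p i + s * d i + b i \<le> p j + s * d j + b j"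
      proof (cases "yy \<le> b i + p i")
        case True
        then have "yy \<le> b j + p j" using q by simp
        then show ?thesis using True q al unfolding d_def c_def by (simp add: algebra_simps)
      next
        case False
        then have F: "b i + p i < yy" by simp
        have "s \<le> yy - (b i + p i)" using s0le[OF _ F] ij that by simp
        then show ?thesis using False q al unfolding d_def c_def
          by (auto simp: algebra_simps)
      qed
    qed
    then show ?thesis unfolding shift_set_def
      by (intro CollectI exI[of _ "\<lambda>i. p i + s * d i + b i"]) auto
  qed
  have "(\<Sum>i<m. (p i - a i) * d i) \<ge> 0"
    by (rule proj_dir[OF P s0pos mem]) auto
  then show ?thesis unfolding d_def c_def
    by (simp add: algebra_simps sum_subtractf sum_negf)
qed

lemma rho_sub:
  assumes "0 \<le> al" "al \<le> 1"
  shows "rho al q yy - rho al u yy \<le> ((if yy \<le> q then 1 else 0) - al) * (q - u)"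
proof (cases "yy \<le> q")
  case True
  have "rho al u yy \<ge> (1 - al) * (u - yy)"
    unfolding rho_def using assms by (auto simp: abs_if mult_left_mono algebra_simps intro: order_trans[of _ 0] mult_nonneg_nonneg)
  moreover have "rho al q yy = (1 - al) * (q - yy)" unfolding rho_def using True by auto
  ultimately show ?thesis using True by (simp add: algebra_simps)
next
  case False
  have "rho al u yy \<ge> al * (yy - u)"
    unfolding rho_def using assms by (auto simp: abs_if algebra_simps intro: order_trans[of _ 0] mult_nonneg_nonneg)
  moreover have "rho al q yy = al * (yy - q)" unfolding rho_def using False by auto
  ultimately show ?thesis using False by (simp add: algebra_simps)
qed

lemma rho_clip:
  assumes "0 \<le> al" "al \<le> 1" "\<bar>yy - bb\<bar> \<le> R"
  shows "rho al (bb + max (- R) (min R th)) yy \<le> rho al (bb + th) yy"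
proof -
  have R: "R \<ge> 0" using assms(3) by linarith
  have y1: "yy \<le> bb + R" "bb - R \<le> yy" using assms(3) by linarith+
  consider "th > R" | "th < - R" | "- R \<le> th \<and> th \<le> R" by linarith
  then show ?thesis
  proof cases
    case 1
    then have e: "max (- R) (min R th) = R" using R by simp
    have "(1 - al) * (bb + R - yy) \<le> (1 - al) * (bb + th - yy)"
      using 1 assms by (intro mult_left_mono) auto
    then show ?thesis unfolding e rho_def using 1 assms y1 by (auto simp: abs_if)
  next
    case 2
    then have e: "max (- R) (min R th) = - R" using R by simp
    have "al * (yy - (bb - R)) \<le> al * (yy - (bb + th))"
      using 2 assms by (intro mult_left_mono) auto
    then show ?thesis unfolding e rho_def using 2 assms y1 by (auto simp: abs_if)
  next
    case 3
    then have "max (- R) (min R th) = th" by simp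
    then show ?thesis by simp
  qed
qed

lemma tele:
  fixes a g :: "nat \<Rightarrow> nat \<Rightarrow> real" and u :: "nat \<Rightarrow> real"
  assumes upd: "\<And>t i. t \<ge> 1 \<Longrightarrow> i < m \<Longrightarrow> a (t+1) i = a t i - \<eta> * g t i"
  shows "2*\<eta>*(\<Sum>t=1..T. \<Sum>i<m. g t i * (a t i - u i)) =
    (\<Sum>i<m. (a 1 i - u i)^2) - (\<Sum>i<m. (a (T+1) i - u i)^2) + \<eta>^2*(\<Sum>t=1..T. \<Sum>i<m. (g t i)^2)"
proof (induction T)
  case 0
  then show ?case by simp
next
  case (Suc T)
  have st: "2*\<eta>*(\<Sum>i<m. g (Suc T) i * (a (Suc T) i - u i)) =
     (\<Sum>i<m. (a (Suc T) i - u i)^2) - (\<Sum>i<m. (a (Suc T + 1) i - u i)^2) + \<eta>^2*(\<Sum>i<m. (g (Suc T) i)^2)"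
  proof -
    have "(\<Sum>i<m. (a (Suc T + 1) i - u i)^2) = (\<Sum>i<m. (a (Suc T) i - u i)^2 - 2*\<eta>*(g (Suc T) i * (a (Suc T) i - u i)) + \<eta>^2*(g (Suc T) i)^2)"
    proof (rule sum.cong)
      fix i assume "i \<in> {..<m}"
      then have e: "a (Suc T + 1) i = a (Suc T) i - \<eta> * g (Suc T) i" using upd[of "Suc T" i] by simp
      show "(a (Suc T + 1) i - u i)^2 = (a (Suc T) i - u i)^2 - 2*\<eta>*(g (Suc T) i * (a (Suc T) i - u i)) + \<eta>^2*(g (Suc T) i)^2"
        unfolding e by (simp add: power2_eq_square algebra_simps)
    qed simp
    then show ?thesis by (simp add: sum.distrib sum_subtractf sum_distrib_left)
  qed
  show ?case using Suc st by (simp add: algebra_simps)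
qed

theorem proposition8:
  fixes m T :: nat and alpha :: "nat \<Rightarrow> real" and \<eta> R :: real
    and b :: "nat \<Rightarrow> nat \<Rightarrow> real" and y :: "nat \<Rightarrow> real"
    and tth th :: "nat \<Rightarrow> nat \<Rightarrow> real" and \<theta> :: "nat \<Rightarrow> real"
  assumes alpha_mono: "\<And>i j. i < j \<Longrightarrow> j < m \<Longrightarrow> alpha i < alpha j"
    and alpha_range: "\<And>i. i < m \<Longrightarrow> 0 < alpha i \<and> alpha i < 1"
    and bK: "\<And>t. t \<ge> 1 \<Longrightarrow> b t \<in> Kset m"
    and bound: "\<And>t i. t \<ge> 1 \<Longrightarrow> i < m \<Longrightarrow> \<bar>y t - b t i\<bar> \<le> R"
    and eta: "\<eta> > 0"
    and T: "T \<ge> 1"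
    and alg: "multiqt m alpha \<eta> b y (\<lambda>_. 0) tth th"
    and theta: "\<theta> \<in> (\<Inter>t\<in>{1..T+1}. shift_set (Kset m) (b t))"
  shows "(1 / real T) * (\<Sum>t=1..T. rhoA m alpha (\<lambda>i. b t i + th t i) (y t))
           - (1 / real T) * (\<Sum>t=1..T. rhoA m alpha (\<lambda>i. b t i + \<theta> i) (y t))
         \<le> R^2 * real m / (2 * \<eta> * real T) + 2 * \<eta> * real m"
  proof -
  define c where "c t i = (if y t \<le> b t i + th t i then 1 else (0::real))" for t i
  define g where "g t i = c t i - alpha i" for t i
  define u where "u i = max (- R) (min R (\<theta> i))" for i
  have a1: "\<And>i. i < m \<Longrightarrow> tth 1 i = 0"
    and proj: "\<And>t. t \<ge> 1 \<Longrightarrow> is_proj m (shift_set (Kset m) (b t)) (tth t) (th t)"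
    and upd0: "\<And>t i. t \<ge> 1 \<Longrightarrow> i < m \<Longrightarrow> tth (t+1) i =
        tth t i - \<eta> * ((if y t \<le> b t i + th t i then 1 else 0) - alpha i)"
    using alg unfolding multiqt_def by auto
  have upd: "\<And>t i. t \<ge> 1 \<Longrightarrow> i < m \<Longrightarrow> tth (t+1) i = tth t i - \<eta> * g t i"
    using upd0 unfolding g_def c_def by simp
  have amono: "\<And>i j. i \<le> j \<Longrightarrow> j < m \<Longrightarrow> alpha i \<le> alpha j"
    using alpha_mono by (metis le_less order_refl)
  have al01: "\<And>i. i < m \<Longrightarrow> 0 \<le> alpha i \<and> alpha i \<le> 1" using alpha_range by fastforce
  have per: "rhoA m alpha (\<lambda>i. b t i + th t i) (y t) - rhoA m alpha (\<lambda>i. b t i + \<theta> i) (y t)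
      \<le> (\<Sum>i<m. g t i * (tth t i - u i))" if t: "t \<ge> 1" for t
  proof -
    have "rhoA m alpha (\<lambda>i. b t i + \<theta> i) (y t) \<ge> rhoA m alpha (\<lambda>i. b t i + u i) (y t)"
      unfolding rhoA_def u_def using al01 bound[OF t]
      by (intro sum_mono rho_clip) auto
    moreover have "rhoA m alpha (\<lambda>i. b t i + th t i) (y t) - rhoA m alpha (\<lambda>i. b t i + u i) (y t)
        \<le> (\<Sum>i<m. g t i * (th t i - u i))"
      unfolding rhoA_def sum_subtractf[symmetric]
    proof (rule sum_mono)
      fix i assume "i \<in> {..<m}"
      then have "0 \<le> alpha i" "alpha i \<le> 1" using al01 by auto
      from rho_sub[OF this, of "b t i + th t i" "y t" "b t i + u i"]
      show "rho (alpha i) (b t i + th t i) (y t) - rho (alpha i) (b t i + u i) (y t) \<le> g t i * (th t i - u i)"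
        unfolding g_def c_def by simp
    qed
    moreover have "(\<Sum>i<m. g t i * (th t i - tth t i)) \<le> 0"
      using step_ineq[OF proj[OF t] amono, where yy = "y t"] unfolding g_def c_def by simp
    moreover have "(\<Sum>i<m. g t i * (th t i - u i)) = (\<Sum>i<m. g t i * (tth t i - u i)) + (\<Sum>i<m. g t i * (th t i - tth t i))"
      by (simp add: sum.distrib[symmetric] algebra_simps)
    ultimately show ?thesis by linarith
  qed
  define D where "D = (\<Sum>t=1..T. rhoA m alpha (\<lambda>i. b t i + th t i) (y t)) - (\<Sum>t=1..T. rhoA m alpha (\<lambda>i. b t i + \<theta> i) (y t))"
  have "D \<le> (\<Sum>t=1..T. \<Sum>i<m. g t i * (tth t i - u i))"
    unfolding D_def sum_subtractf[symmetric] by (intro sum_mono per) auto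
  moreover have "2*\<eta>*(\<Sum>t=1..T. \<Sum>i<m. g t i * (tth t i - u i)) =
    (\<Sum>i<m. (tth 1 i - u i)^2) - (\<Sum>i<m. (tth (T+1) i - u i)^2) + \<eta>^2*(\<Sum>t=1..T. \<Sum>i<m. (g t i)^2)"
    by (rule tele) (rule upd)
  moreover have "(\<Sum>i<m. (tth 1 i - u i)^2) \<le> (\<Sum>i<m. R^2)"
  proof (rule sum_mono)
    fix i assume i: "i \<in> {..<m}"
    then have R: "R \<ge> 0" using bound[of 1 i] by fastforce
    have "\<bar>u i\<bar> \<le> \<bar>R\<bar>" unfolding u_def using R by auto
    then have "(u i)^2 \<le> R^2" by (simp add: abs_le_square_iff)
    then show "(tth 1 i - u i)^2 \<le> R^2" using a1 i by simp
  qed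
  moreover have "(\<Sum>t=1..T. \<Sum>i<m. (g t i)^2) \<le> (\<Sum>t=1..T. \<Sum>i<m. 1)"
  proof (intro sum_mono)
    fix t i assume "i \<in> {..<m}"
    then have "0 < alpha i" "alpha i < 1" using alpha_range by auto
    then have "\<bar>g t i\<bar> \<le> 1" unfolding g_def c_def by auto
    then show "(g t i)^2 \<le> 1" by (simp add: abs_square_le_1)
  qed
  moreover have "(0::real) \<le> (\<Sum>i<m. (tth (T+1) i - u i)^2)" by (simp add: sum_nonneg)
  ultimately have "2*\<eta>*D \<le> real m * R^2 + \<eta>^2 * (real T * real m)"
    using eta by (simp add: mult_left_mono) (smt (verit, best) mult_left_mono zero_le_power2 eta)
  then have "D \<le> (real m * R^2 + \<eta>^2 * (real T * real m)) / (2*\<eta>)"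
    using eta by (simp add: field_simps)
  then have "D / real T \<le> (real m * R^2 + \<eta>^2 * (real T * real m)) / (2*\<eta>) / real T"
    using T by (intro divide_right_mono) auto
  also have "\<dots> = R^2 * real m / (2 * \<eta> * real T) + \<eta> * real m / 2"
    using eta T by (simp add: field_simps power2_eq_square)
  also have "\<dots> \<le> R^2 * real m / (2 * \<eta> * real T) + 2 * \<eta> * real m"
    using eta by simp
  finally have F: "D / real T \<le> R^2 * real m / (2 * \<eta> * real T) + 2 * \<eta> * real m" .
  have "D / real T = (1 / real T) * (\<Sum>t=1..T. rhoA m alpha (\<lambda>i. b t i + th t i) (y t))
           - (1 / real T) * (\<Sum>t=1..T. rhoA m alpha (\<lambda>i. b t i + \<theta> i) (y t))"
    unfolding D_def by (simp add: diff_divide_distrib)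
  with F show ?thesis by simp
qed

end
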